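(* Let $V\subseteq R_d$ be a Gotzmann monomial vector space and let $V=V_0\oplus x_iV_1$ be its $x_i$-decomposition. Then $V_0$ is Gotzmann in $Q=R/(x_i)$.
   Context: Let $\Bbbk$ be a field, $R=\Bbbk[x_1,\dots,x_n]/(x_1^2,\dots,x_n^2)$, $R_d$ its degree-$d$ component. A monomial vector space is a subspace of some $R_d$ spanned by monomials; for such $V$, $\mathbf m_1V$ is the span of $\{x_jm\}$ over monomials $m\in V$ and all $j$. A subspace $V\subseteq R_d$ is Gotzmann if $|\mathbf m_1V|\le|\mathbf m_1W|$ for every subspace $W\subseteq R_d$ with $|W|=|V|$ ($|\cdot|$ denotes dimension). Fix a variable $x_i$, let $Q=R/(x_i)$ (the analogous squarefree ring in the variables other than $x_i$, with $\mathbf n_1$ the analogous operation and Gotzmann defined analogously in $Q$). The $x_i$-decomposition of a monomial vector space $V\subseteq R_d$ is $V=V_0\oplus x_iV_1$, where $V_0\subseteq Q_d$ is spanned by the monomials of $V$ not divisible by $x_i$ and $V_1\subseteq Q_{d-1}$ is spanned by the monomials $m$ with $x_im\in V$. *)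

theory Defs
  imports Main "HOL.Vector_Spaces" "HOL-Library.Function_Algebras"
begin

text \<open>Squarefree algebra R = k[x_j : j in X]/(x_j^2). An element of R is a
k-valued coefficient function on finite sets of variables (squarefree monomials).\<close>

type_synonym 'k elt = "nat set \<Rightarrow> 'k"

definition fscale :: "'k::field \<Rightarrow> 'k elt \<Rightarrow> 'k elt" where
  "fscale c f = (\<lambda>S. c * f S)"

lemma vector_space_fscale: "vector_space (fscale :: 'k::field \<Rightarrow> 'k elt \<Rightarrow> 'k elt)"
  by unfold_locales (auto simp: fscale_def algebra_simps fun_eq_iff)

abbreviation kspan :: "'k::field elt set \<Rightarrow> 'k elt set" where
  "kspan \<equiv> module.span fscale"

abbreviation ksubspace :: "'k::field elt set \<Rightarrow> bool" where
  "ksubspace \<equiv> module.subspace fscale"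

abbreviation kdim :: "'k::field elt set \<Rightarrow> nat" where
  "kdim \<equiv> vector_space.dim fscale"

definition Rdeg :: "nat set \<Rightarrow> nat \<Rightarrow> 'k::field elt set" where
  "Rdeg X d = {f. \<forall>S. f S \<noteq> 0 \<longrightarrow> S \<subseteq> X \<and> card S = d}"

definition mono :: "nat set \<Rightarrow> 'k::field elt" where
  "mono S = (\<lambda>T. if T = S then 1 else 0)"

text \<open>Multiplication by the variable x_j (using x_j^2 = 0).\<close>
definition mulvar :: "nat \<Rightarrow> 'k::field elt \<Rightarrow> 'k elt" where
  "mulvar j f = (\<lambda>T. if j \<in> T then f (T - {j}) else 0)"

definition m1 :: "nat set \<Rightarrow> 'k::field elt set \<Rightarrow> 'k elt set" where
  "m1 X V = kspan (\<Union>j\<in>X. mulvar j ` V)"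

definition monomial_space :: "nat set \<Rightarrow> nat \<Rightarrow> 'k::field elt set \<Rightarrow> bool" where
  "monomial_space X d V \<longleftrightarrow>
     (\<exists>M. M \<subseteq> {S. S \<subseteq> X \<and> card S = d} \<and> V = kspan (mono ` M))"

definition gotzmann :: "nat set \<Rightarrow> nat \<Rightarrow> 'k::field elt set \<Rightarrow> bool" where
  "gotzmann X d V \<longleftrightarrow> ksubspace V \<and> V \<subseteq> Rdeg X d \<and>
     (\<forall>W :: 'k elt set. ksubspace W \<and> W \<subseteq> Rdeg X d \<and> kdim W = kdim V \<longrightarrow> kdim (m1 X V) \<le> kdim (m1 X W))"

definition decomp0 :: "nat \<Rightarrow> 'k::field elt set \<Rightarrow> 'k elt set" where
  "decomp0 i V = kspan (mono ` {S. i \<notin> S \<and> mono S \<in> V})"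

definition decomp1 :: "nat \<Rightarrow> 'k::field elt set \<Rightarrow> 'k elt set" where
  "decomp1 i V = kspan (mono ` {S. i \<notin> S \<and> mulvar i (mono S) \<in> V})"

end

theory Submission
  imports Defs
begin

definition val :: "nat set \<Rightarrow> nat" where "val S = (\<Sum>x\<in>S. 2^x)"

lemma val_empty[simp]: "val {} = 0" by (simp add: val_def)

lemma val_bound: assumes "finite P" "\<forall>x\<in>P. x < m" shows "val P < 2^m"
proof -
  have "val P \<le> (\<Sum>x\<in>{0..<m}. 2^x)" unfolding val_def
    by (rule sum_mono2) (use assms in auto)
  also have "\<dots> = 2^m - 1" by (rule sum_power2)
  finally have "val P \<le> 2^m - 1" .
  moreover have "(0::nat) < 2^m" by simp
  ultimately show ?thesis by linarith
qed

lemma val_union: "finite A \<Longrightarrow> finite B \<Longrightarrow> A \<inter> B = {} \<Longrightarrow> val (A \<union> B) = val A + val B"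
  unfolding val_def by (rule sum.union_disjoint)

lemma val_diff: "finite A \<Longrightarrow> B \<subseteq> A \<Longrightarrow> val A = val (A - B) + val B"
proof -
  assume a: "finite A" "B \<subseteq> A"
  have "A = (A - B) \<union> B" using a by auto
  then have "val A = val ((A - B) \<union> B)" by simp
  also have "\<dots> = val (A - B) + val B" using a by (intro val_union) (auto intro: finite_subset)
  finally show ?thesis .
qed

lemma val_insert: "finite A \<Longrightarrow> x \<notin> A \<Longrightarrow> val (insert x A) = val A + 2^x"
  unfolding val_def by simp

lemma val_ge_max: assumes "finite Q" "m \<in> Q" shows "2^m \<le> val Q"
  unfolding val_def using assms by (metis member_le_sum zero_le)

lemma val_lt_disj: assumes "finite P" "finite Q" "P \<inter> Q = {}" "Q \<noteq> {}" "\<forall>p\<in>P. p < Max Q"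
  shows "val P < val Q"
  using val_bound[OF assms(1,5)] val_ge_max[OF assms(2) Max_in[OF assms(2,4)]] by simp

lemma val_less_if: assumes "finite A" "finite B" "A \<noteq> B" "Max ((A - B) \<union> (B - A)) \<in> B"
  shows "val A < val B"
proof -
  let ?D = "(A - B) \<union> (B - A)"
  have fD: "finite ?D" using assms by auto
  have ne: "?D \<noteq> {}" using assms(3) by auto
  have mB: "Max ?D \<in> B - A" using assms(4) Max_in[OF fD ne] by auto
  have MQ: "Max (B - A) = Max ?D"
  proof (rule antisym)
    show "Max (B - A) \<le> Max ?D" using mB assms(2) fD by (intro Max_mono) auto
    show "Max ?D \<le> Max (B - A)" using mB assms(2) by (intro Max_ge) auto
  qed
  have "\<forall>p\<in>A - B. p < Max (B - A)"
  proof
    fix p assume p: "p \<in> A - B"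
    then have "p \<le> Max ?D" using fD by auto
    moreover have "p \<noteq> Max ?D" using p mB by auto
    ultimately show "p < Max (B - A)" using MQ by simp
  qed
  then have "val (A - B) < val (B - A)"
    by (intro val_lt_disj) (use assms mB in auto)
  moreover have "val A = val (A - B) + val (A \<inter> B)"
  proof -
    have "A - A \<inter> B = A - B" by auto
    then show ?thesis using val_diff[OF assms(1), of "A \<inter> B"] by simp
  qed
  moreover have "val B = val (B - A) + val (A \<inter> B)"
  proof -
    have "B - A \<inter> B = B - A" by auto
    then show ?thesis using val_diff[OF assms(2), of "A \<inter> B"] by simp
  qed
  ultimately show ?thesis by simp
qed

lemma val_cases: assumes "finite A" "finite B" "A \<noteq> B"
  shows "val A < val B \<or> val B < val A"
proof -
  let ?D = "(A - B) \<union> (B - A)"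
  have "Max ?D \<in> ?D" using assms by (intro Max_in) auto
  then show ?thesis
    using val_less_if[OF assms] val_less_if[of B A] assms by (auto simp: Un_commute)
qed

lemma val_inj: "finite A \<Longrightarrow> finite B \<Longrightarrow> val A = val B \<Longrightarrow> A = B"
  using val_cases by (metis less_irrefl)

lemma val_less_iff: assumes "finite A" "finite B" "A \<noteq> B"
  shows "val A < val B \<longleftrightarrow> Max ((A - B) \<union> (B - A)) \<in> B"
proof -
  let ?D = "(A - B) \<union> (B - A)"
  have "Max ?D \<in> ?D" using assms by (intro Max_in) auto
  then show ?thesis
    using val_less_if[OF assms] val_less_if[of B A] assms by (auto simp: Un_commute)
qed

definition fam :: "nat set \<Rightarrow> nat \<Rightarrow> nat set set" where
  "fam Y k = {S. S \<subseteq> Y \<and> card S = k}"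

definition ush :: "nat set \<Rightarrow> nat set set \<Rightarrow> nat set set" where
  "ush Y F = {insert x S | S x. S \<in> F \<and> x \<in> Y \<and> x \<notin> S}"

definition compressed :: "nat set \<Rightarrow> nat set \<Rightarrow> nat set set \<Rightarrow> bool" where
  "compressed U V F \<longleftrightarrow> (\<forall>A\<in>F. V \<subseteq> A \<and> U \<inter> A = {} \<longrightarrow> (A - V) \<union> U \<in> F)"

definition mv :: "nat set \<Rightarrow> nat set \<Rightarrow> nat set set \<Rightarrow> nat set set" where
  "mv U V F = {A\<in>F. V \<subseteq> A \<and> U \<inter> A = {} \<and> (A - V) \<union> U \<notin> F}"

definition cfam :: "nat set \<Rightarrow> nat set \<Rightarrow> nat set set \<Rightarrow> nat set set" where
  "cfam U V F = (F - mv U V F) \<union> (\<lambda>A. (A - V) \<union> U) ` mv U V F"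

lemma ushI: "S \<in> F \<Longrightarrow> x \<in> Y \<Longrightarrow> x \<notin> S \<Longrightarrow> insert x S \<in> ush Y F"
  unfolding ush_def by blast

lemma ushE: "D \<in> ush Y F \<Longrightarrow> (\<And>S x. S \<in> F \<Longrightarrow> x \<in> Y \<Longrightarrow> x \<notin> S \<Longrightarrow> D = insert x S \<Longrightarrow> P) \<Longrightarrow> P"
  unfolding ush_def by blast

lemma ush_mono: "F \<subseteq> G \<Longrightarrow> ush Y F \<subseteq> ush Y G"
  unfolding ush_def by blast

lemma ush_Pow: "F \<subseteq> Pow Y \<Longrightarrow> ush Y F \<subseteq> Pow Y"
  unfolding ush_def by blast

lemma cfam_notin: "B \<in> cfam U V F \<Longrightarrow> B \<notin> F \<Longrightarrow>
   \<exists>A\<in>F. V \<subseteq> A \<and> U \<inter> A = {} \<and> B = (A - V) \<union> U"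
  unfolding cfam_def mv_def by auto

lemma cfam_disj: "E \<in> cfam U V F \<Longrightarrow> U \<noteq> {} \<Longrightarrow> U \<inter> E = {} \<Longrightarrow>
   E \<in> F \<and> (V \<subseteq> E \<longrightarrow> (E - V) \<union> U \<in> F)"
  unfolding cfam_def mv_def by auto

lemma card_split: "finite A \<Longrightarrow> card A = card (A \<inter> B) + card (A - B)"
  by (metis Diff_Diff_Int add.commute card_Diff_subset_Int finite_Diff finite_Int inf_le1
       card_Diff_subset card_mono diff_add_inverse le_add_diff_inverse2)

lemma compress_ush_le:
  assumes Y: "finite Y" and FY: "F \<subseteq> Pow Y" and UY: "U \<subseteq> Y"
    and Une: "U \<noteq> {}" and UV: "U \<inter> V = {}"
    and hyp: "\<forall>v\<in>V. \<exists>u\<in>U. compressed (U - {u}) (V - {v}) F"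
  shows "card (ush Y (cfam U V F)) \<le> card (ush Y F)"
proof -
  let ?F' = "cfam U V F"
  let ?phi = "\<lambda>D. (D - U) \<union> V"
  have F'Y: "?F' \<subseteq> Pow Y" using FY UY unfolding cfam_def mv_def by auto
  have fin1: "finite (ush Y F)" using ush_Pow[OF FY] Y by (meson finite_Pow_iff finite_subset)
  have fin2: "finite (ush Y ?F')" using ush_Pow[OF F'Y] Y by (meson finite_Pow_iff finite_subset)
  have key: "U \<subseteq> D \<and> D \<inter> V = {} \<and> ?phi D \<in> ush Y F - ush Y ?F'"
    if D1: "D \<in> ush Y ?F'" and D2: "D \<notin> ush Y F" for D
  proof -
    obtain B x where B: "B \<in> ?F'" "x \<in> Y" "x \<notin> B" "D = insert x B"
      using D1 by (rule ushE) blast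
    have BF: "B \<notin> F" using B D2 ushI by blast
    obtain A where A: "A \<in> F" "V \<subseteq> A" "U \<inter> A = {}" "B = (A - V) \<union> U"
      using cfam_notin[OF B(1) BF] by blast
    have xV: "x \<notin> V"
    proof
      assume xv: "x \<in> V"
      obtain u where u: "u \<in> U" "compressed (U - {u}) (V - {x}) F" using hyp xv by blast
      have "(A - (V - {x})) \<union> (U - {u}) \<in> F"
        using u(2) A unfolding compressed_def by blast
      moreover have "D = insert u ((A - (V - {x})) \<union> (U - {u}))"
        using B(4) A xv u(1) by auto
      moreover have "u \<notin> (A - (V - {x})) \<union> (U - {u})" using A(3) u(1) by auto
      ultimately have "D \<in> ush Y F" using ushI u(1) UY by blast
      then show False using D2 by simp
    qed
    have UD: "U \<subseteq> D" using A B by auto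
    have DV: "D \<inter> V = {}" using A B xV UV by auto
    have xA: "x \<notin> A" using A B xV by auto
    have phiD: "?phi D = insert x A" using A B xV UV by auto
    have in1: "?phi D \<in> ush Y F" using phiD ushI[OF A(1) B(2) xA] by simp
    have in2: "?phi D \<notin> ush Y ?F'"
    proof
      assume "?phi D \<in> ush Y ?F'"
      then obtain E y where E: "E \<in> ?F'" "y \<in> Y" "y \<notin> E" "?phi D = insert y E"
        by (rule ushE) blast
      have UE: "U \<inter> E = {}" using E(4) phiD A(3) B(3) A(4) by auto
      have yU: "y \<notin> U" using E(4) phiD A(3) B(3) A(4) by auto
      have EF: "E \<in> F \<and> (V \<subseteq> E \<longrightarrow> (E - V) \<union> U \<in> F)" using cfam_disj[OF E(1) Une UE] .
      show False
      proof (cases "y \<in> V")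
        case False
        have "V \<subseteq> E" using E(4) phiD A(2) False by auto
        then have c: "(E - V) \<union> U \<in> F" using EF by blast
        have "D = insert y ((E - V) \<union> U)"
          using E(4) phiD UD DV False by auto
        moreover have "y \<notin> (E - V) \<union> U" using E(3) yU by auto
        ultimately have "D \<in> ush Y F" using ushI[OF c E(2)] by simp
        then show False using D2 by simp
      next
        case True
        obtain u where u: "u \<in> U" "compressed (U - {u}) (V - {y}) F" using hyp True by blast
        have "V - {y} \<subseteq> E" using E(4) phiD A(2) by auto
        then have c: "(E - (V - {y})) \<union> (U - {u}) \<in> F"
          using u(2) EF UE unfolding compressed_def by blast
        have "D = insert u ((E - (V - {y})) \<union> (U - {u}))"
          using E(4) E(3) phiD UD DV True u(1) UE by auto
        moreover have "u \<notin> (E - (V - {y})) \<union> (U - {u})" using UE u(1) by auto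
        ultimately have "D \<in> ush Y F" using ushI[OF c] u(1) UY by blast
        then show False using D2 by simp
      qed
    qed
    show ?thesis using UD DV in1 in2 by blast
  qed
  have inj: "inj_on ?phi (ush Y ?F' - ush Y F)"
  proof (rule inj_onI)
    fix D1 D2 assume d: "D1 \<in> ush Y ?F' - ush Y F" "D2 \<in> ush Y ?F' - ush Y F" "?phi D1 = ?phi D2"
    have "D1 = (?phi D1 - V) \<union> U" using key[of D1] d(1) UV by auto
    moreover have "D2 = (?phi D2 - V) \<union> U" using key[of D2] d(2) UV by auto
    ultimately show "D1 = D2" using d(3) by simp
  qed
  have "card (ush Y ?F' - ush Y F) \<le> card (ush Y F - ush Y ?F')"
    by (rule card_inj_on_le[OF inj]) (use key fin1 in auto)
  moreover have "card (ush Y ?F') = card (ush Y ?F' \<inter> ush Y F) + card (ush Y ?F' - ush Y F)"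
    using card_split[OF fin2] .
  moreover have "card (ush Y F) = card (ush Y F \<inter> ush Y ?F') + card (ush Y F - ush Y ?F')"
    using card_split[OF fin1] .
  ultimately show ?thesis by (simp add: Int_commute)
qed

lemma card_cfam: assumes "finite F" shows "card (cfam U V F) = card F"
proof -
  let ?g = "\<lambda>A. (A - V) \<union> U"
  have inj: "inj_on ?g (mv U V F)"
  proof (rule inj_onI)
    fix A B assume "A \<in> mv U V F" "B \<in> mv U V F" "?g A = ?g B"
    then have "(?g A - U) \<union> V = (?g B - U) \<union> V" by simp
    moreover have "(?g A - U) \<union> V = A" using \<open>A \<in> mv U V F\<close> unfolding mv_def by auto
    moreover have "(?g B - U) \<union> V = B" using \<open>B \<in> mv U V F\<close> unfolding mv_def by auto
    ultimately show "A = B" by simp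
  qed
  have mvF: "mv U V F \<subseteq> F" unfolding mv_def by auto
  have disj: "(F - mv U V F) \<inter> ?g ` mv U V F = {}" unfolding mv_def by auto
  have "card (cfam U V F) = card (F - mv U V F) + card (?g ` mv U V F)"
    unfolding cfam_def using assms mvF disj by (intro card_Un_disjoint) (auto intro: finite_subset)
  also have "card (?g ` mv U V F) = card (mv U V F)" using card_image[OF inj] .
  also have "card (F - mv U V F) + card (mv U V F) = card F"
    using assms mvF by (metis card_Diff_subset card_mono finite_subset le_add_diff_inverse2)
  finally show ?thesis .
qed

lemma cfam_fam: assumes Y: "finite Y" and "F \<subseteq> fam Y k" "U \<subseteq> Y" "card U = card V" "U \<inter> V = {}"
  shows "cfam U V F \<subseteq> fam Y k"
proof
  fix E assume "E \<in> cfam U V F"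
  then consider "E \<in> F" | A where "A \<in> F" "V \<subseteq> A" "U \<inter> A = {}" "E = (A - V) \<union> U"
    unfolding cfam_def mv_def by auto
  then show "E \<in> fam Y k"
  proof cases
    case 1 then show ?thesis using assms by auto
  next
    case 2
    have AY: "A \<subseteq> Y" "card A = k" using 2 assms(2) unfolding fam_def by auto
    have fA: "finite A" using AY Y by (meson finite_subset)
    have fU: "finite U" using assms(3) Y by (meson finite_subset)
    have fV: "finite V" using 2(2) fA by (meson finite_subset)
    have "card E = card (A - V) + card U" unfolding 2(4)
      by (rule card_Un_disjoint) (use fA fU 2(3) in auto)
    also have "card (A - V) = card A - card V" using card_Diff_subset[OF fV 2(2)] .
    finally have "card E = k" using AY(2) card_mono[OF fA 2(2)] assms(4) by simp
    moreover have "E \<subseteq> Y" using 2 AY assms(3) by auto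
    ultimately show ?thesis unfolding fam_def by simp
  qed
qed

lemma sum_cfam_gt:
  assumes fF: "finite F" and ne: "mv U V F \<noteq> {}" and lt: "val V < val U"
    and fin: "\<forall>A\<in>F. finite A" and fU: "finite U"
  shows "(\<Sum>A\<in>F. val A) < (\<Sum>A\<in>cfam U V F. val A)"
proof -
  let ?g = "\<lambda>A. (A - V) \<union> U"
  let ?M = "mv U V F"
  have inj: "inj_on ?g ?M"
  proof (rule inj_onI)
    fix A B assume "A \<in> ?M" "B \<in> ?M" "?g A = ?g B"
    then have "(?g A - U) \<union> V = (?g B - U) \<union> V" by simp
    moreover have "(?g A - U) \<union> V = A" using \<open>A \<in> ?M\<close> unfolding mv_def by auto
    moreover have "(?g B - U) \<union> V = B" using \<open>B \<in> ?M\<close> unfolding mv_def by auto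
    ultimately show "A = B" by simp
  qed
  have mvF: "?M \<subseteq> F" unfolding mv_def by auto
  have fM: "finite ?M" using mvF fF by (meson finite_subset)
  have disj: "(F - ?M) \<inter> ?g ` ?M = {}" unfolding mv_def by auto
  have "(\<Sum>A\<in>F. val A) = (\<Sum>A\<in>F - ?M. val A) + (\<Sum>A\<in>?M. val A)"
    using fF mvF by (metis sum.subset_diff)
  also have "(\<Sum>A\<in>?M. val A) < (\<Sum>A\<in>?M. val (?g A))"
  proof (rule sum_strict_mono_ex1[OF fM])
    have *: "val A < val (?g A)" if "A \<in> ?M" for A
    proof -
      have A: "A \<in> F" "V \<subseteq> A" "U \<inter> A = {}" using that unfolding mv_def by auto
      have fA: "finite A" using A fin by auto
      have "val A = val (A - V) + val V" using val_diff[OF fA A(2)] .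
      moreover have "val (?g A) = val (A - V) + val U"
        by (rule val_union) (use fA fU A in auto)
      ultimately show ?thesis using lt by simp
    qed
    show "\<forall>x\<in>?M. val x \<le> val (?g x)" using * by (simp add: less_imp_le)
    show "\<exists>a\<in>?M. val a < val (?g a)" using * ne by blast
  qed
  also have "(\<Sum>A\<in>?M. val (?g A)) = (\<Sum>A\<in>?g ` ?M. val A)"
    using sum.reindex[OF inj, of val] by (simp add: o_def)
  also have "(\<Sum>A\<in>F - ?M. val A) + (\<Sum>A\<in>?g ` ?M. val A) = (\<Sum>A\<in>cfam U V F. val A)"
    unfolding cfam_def using fF fM disj by (intro sum.union_disjoint[symmetric]) auto
  finally show ?thesis by simp
qed

definition final :: "nat set \<Rightarrow> nat \<Rightarrow> nat set set \<Rightarrow> bool" where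
  "final Y k G \<longleftrightarrow> G \<subseteq> fam Y k \<and> (\<forall>A\<in>G. \<forall>B\<in>fam Y k. val A < val B \<longrightarrow> B \<in> G)"

lemma fam_finite: "finite Y \<Longrightarrow> finite (fam Y k)"
  unfolding fam_def by (rule finite_subset[of _ "Pow Y"]) auto

lemma fam_mem_finite: "finite Y \<Longrightarrow> A \<in> fam Y k \<Longrightarrow> finite A"
  unfolding fam_def by (auto intro: finite_subset)

lemma val_disj_iff: assumes "finite U" "finite V" "U \<inter> V = {}" "U \<noteq> {}"
  shows "val V < val U \<longleftrightarrow> Max (U \<union> V) \<in> U"
proof -
  have "V \<noteq> U" using assms by auto
  moreover have "(V - U) \<union> (U - V) = U \<union> V" using assms(3) by auto
  ultimately show ?thesis using val_less_iff[OF assms(2,1)] by simp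
qed

lemma compressed_empty: "compressed {} {} F" unfolding compressed_def by auto

lemma kk_exists:
  assumes Y: "finite Y"
  shows "F \<subseteq> fam Y k \<Longrightarrow> \<exists>G. final Y k G \<and> card G = card F \<and> card (ush Y G) \<le> card (ush Y F)"
proof (induction "(\<Sum>A\<in>fam Y k. val A) - (\<Sum>A\<in>F. val A)" arbitrary: F rule: less_induct)
  case less
  have fF: "finite F" using less.prems fam_finite[OF Y] by (meson finite_subset)
  show ?case
  proof (cases "final Y k F")
    case True then show ?thesis by blast
  next
    case False
    then obtain A B where AB: "A \<in> F" "B \<in> fam Y k" "val A < val B" "B \<notin> F"
      using less.prems unfolding final_def by blast
    define P where "P U V \<longleftrightarrow> U \<subseteq> Y \<and> V \<subseteq> Y \<and> U \<inter> V = {} \<and> card U = card V \<and> U \<noteq> {}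
        \<and> val V < val U \<and> \<not> compressed U V F" for U V
    have AF: "A \<in> fam Y k" using AB less.prems by auto
    have fA: "finite A" and fB: "finite B" using AF AB(2) fam_mem_finite[OF Y] by auto
    have AneB: "A \<noteq> B" using AB by auto
    have P0: "P (B - A) (A - B)"
    proof -
      have cA: "card A = card B" using AF AB(2) unfolding fam_def by simp
      have c: "card (B - A) = card (A - B)"
        using cA card_Diff_subset_Int fA fB
        by (metis Int_commute card_Diff_subset_Int finite_Int)
      have ne: "B - A \<noteq> {}"
      proof
        assume "B - A = {}" then have "B \<subseteq> A" by auto
        then have "B = A" using cA fA by (simp add: card_subset_eq)
        then show False using AneB by simp
      qed
      have "val A = val (A - B) + val (A \<inter> B)"
      proof -
        have "A - A \<inter> B = A - B" by auto
        then show ?thesis using val_diff[OF fA, of "A \<inter> B"] by simp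
      qed
      moreover have "val B = val (B - A) + val (A \<inter> B)"
      proof -
        have "B - A \<inter> B = B - A" by auto
        then show ?thesis using val_diff[OF fB, of "A \<inter> B"] by simp
      qed
      ultimately have lt: "val (A - B) < val (B - A)" using AB(3) by simp
      have nc: "\<not> compressed (B - A) (A - B) F"
      proof
        assume "compressed (B - A) (A - B) F"
        then have "(A - (A - B)) \<union> (B - A) \<in> F" using AB(1) unfolding compressed_def by auto
        moreover have "(A - (A - B)) \<union> (B - A) = B" by auto
        ultimately show False using AB(4) by simp
      qed
      show ?thesis unfolding P_def using AF AB(2) c ne lt nc unfolding fam_def by auto
    qed
    obtain p where p: "P (fst p) (snd p)" "\<forall>q. P (fst q) (snd q) \<longrightarrow> card (fst p) \<le> card (fst q)"
      using ex_has_least_nat[of "\<lambda>p. P (fst p) (snd p)" "(B - A, A - B)" "\<lambda>p. card (fst p)"] P0 by auto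
    obtain U V where UVp: "p = (U, V)" by (cases p)
    have UV: "P U V" using p(1) UVp by simp
    have least: "\<And>U' V'. P U' V' \<Longrightarrow> card U \<le> card U'"
      using p(2) UVp by (metis fst_conv snd_conv)
    have UY: "U \<subseteq> Y" and VY: "V \<subseteq> Y" and UVd: "U \<inter> V = {}" and cUV: "card U = card V"
      and Une: "U \<noteq> {}" and lt: "val V < val U" and nc: "\<not> compressed U V F"
      using UV unfolding P_def by auto
    have fU: "finite U" and fV: "finite V" using UY VY Y by (auto intro: finite_subset)
    have Vne: "V \<noteq> {}" using cUV Une fU fV by auto
    have maxU: "Max (U \<union> V) \<in> U" using val_disj_iff[OF fU fV UVd Une] lt by simp
    have hyp: "\<forall>v\<in>V. \<exists>u\<in>U. compressed (U - {u}) (V - {v}) F"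
    proof
      fix v assume v: "v \<in> V"
      show "\<exists>u\<in>U. compressed (U - {u}) (V - {v}) F"
      proof (cases "card U = 1")
        case True
        then obtain u where "U = {u}" by (meson card_1_singletonE)
        moreover obtain w where "V = {w}" using True cUV by (metis card_1_singletonE)
        ultimately show ?thesis using v compressed_empty by auto
      next
        case False
        define u where "u = Min U"
        have uU: "u \<in> U" using fU Une u_def by simp
        have "card U \<noteq> 0" using Une fU by simp
        then have c2: "card U \<ge> 2" using False by linarith
        have MU: "Max (U \<union> V) \<in> U - {u}"
        proof -
          have "u < Max (U \<union> V)"
          proof (rule ccontr)
            assume "\<not> u < Max (U \<union> V)"
            have "\<forall>x\<in>U. x = u"
            proof
              fix x assume x: "x \<in> U"
              have "u \<le> x" using fU x u_def by simp
              moreover have "x \<le> Max (U \<union> V)" using fU fV x by simp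
              ultimately show "x = u" using \<open>\<not> u < Max (U \<union> V)\<close> by linarith
            qed
            then have "U \<subseteq> {u}" by auto
            then have "card U \<le> 1" using card_mono[of "{u}" U] by simp
            then show False using c2 by simp
          qed
          then show ?thesis using maxU by auto
        qed
        have "compressed (U - {u}) (V - {v}) F"
        proof (rule ccontr)
          assume nc': "\<not> compressed (U - {u}) (V - {v}) F"
          have U'ne: "U - {u} \<noteq> {}" using MU by auto
          have eqM: "(U - {u}) \<union> (V - {v}) \<subseteq> U \<union> V" by auto
          have "Max ((U - {u}) \<union> (V - {v})) = Max (U \<union> V)"
          proof (rule antisym)
            show "Max ((U - {u}) \<union> (V - {v})) \<le> Max (U \<union> V)"
              using U'ne fU fV by (intro Max_mono) auto
            show "Max (U \<union> V) \<le> Max ((U - {u}) \<union> (V - {v}))"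
              using MU fU fV by (intro Max_ge) auto
          qed
          then have "Max ((U - {u}) \<union> (V - {v})) \<in> U - {u}" using MU by simp
          then have lt': "val (V - {v}) < val (U - {u})"
            using val_disj_iff[of "U - {u}" "V - {v}"] fU fV UVd U'ne by auto
          have "card (U - {u}) = card (V - {v})" using cUV uU v fU fV by simp
          then have "P (U - {u}) (V - {v})" unfolding P_def using UY VY UVd U'ne lt' nc' by auto
          then have "card U \<le> card (U - {u})" by (rule least)
          then show False using c2 by (simp add: uU fU)
        qed
        then show ?thesis using uU by blast
      qed
    qed
    let ?F' = "cfam U V F"
    have FPow: "F \<subseteq> Pow Y" using less.prems unfolding fam_def by auto
    have c1: "card (ush Y ?F') \<le> card (ush Y F)"
      by (rule compress_ush_le[OF Y FPow UY Une UVd hyp])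
    have c2: "card ?F' = card F" using card_cfam[OF fF] .
    have F'fam: "?F' \<subseteq> fam Y k" by (rule cfam_fam[OF Y less.prems UY cUV UVd])
    have mvne: "mv U V F \<noteq> {}" using nc unfolding compressed_def mv_def by auto
    have finF: "\<forall>A\<in>F. finite A" using less.prems fam_mem_finite[OF Y] by auto
    have s1: "(\<Sum>A\<in>F. val A) < (\<Sum>A\<in>?F'. val A)"
      by (rule sum_cfam_gt[OF fF mvne lt finF fU])
    have s2: "(\<Sum>A\<in>?F'. val A) \<le> (\<Sum>A\<in>fam Y k. val A)"
      by (rule sum_mono2[OF fam_finite[OF Y] F'fam]) simp
    have "(\<Sum>A\<in>fam Y k. val A) - (\<Sum>A\<in>?F'. val A) < (\<Sum>A\<in>fam Y k. val A) - (\<Sum>A\<in>F. val A)"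
      using s1 s2 by linarith
    from less.hyps[OF this F'fam] obtain G where
      "final Y k G" "card G = card ?F'" "card (ush Y G) \<le> card (ush Y ?F')" by blast
    then show ?thesis using c1 c2 by auto
  qed
qed

lemma final_comparable: assumes Y: "finite Y" and G: "final Y k G" and H: "final Y k H"
  shows "G \<subseteq> H \<or> H \<subseteq> G"
proof (rule ccontr)
  assume "\<not> (G \<subseteq> H \<or> H \<subseteq> G)"
  then obtain A B where AB: "A \<in> G" "A \<notin> H" "B \<in> H" "B \<notin> G" by blast
  have AF: "A \<in> fam Y k" and BF: "B \<in> fam Y k" using AB G H unfolding final_def by auto
  have "A \<noteq> B" using AB by auto
  then have "val A < val B \<or> val B < val A"
    using val_cases fam_mem_finite[OF Y AF] fam_mem_finite[OF Y BF] by blast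
  then show False using AB AF BF G H unfolding final_def by blast
qed

lemma final_card_Un: assumes Y: "finite Y" and G: "final Y k G" and H: "final Y k H"
  shows "card (G \<union> H) = max (card G) (card H)"
proof -
  have fG: "finite G" and fH: "finite H" using G H fam_finite[OF Y] unfolding final_def
    by (auto intro: finite_subset)
  from final_comparable[OF Y G H] show ?thesis
  proof
    assume "G \<subseteq> H" then show ?thesis using card_mono[OF fH, of G] by (simp add: sup.absorb2 max_def)
  next
    assume "H \<subseteq> G" then show ?thesis using card_mono[OF fG, of H] by (simp add: sup.absorb1 max_def)
  qed
qed

lemma ush_fam: "F \<subseteq> fam Y k \<Longrightarrow> finite Y \<Longrightarrow> ush Y F \<subseteq> fam Y (Suc k)"
proof
  fix D assume F: "F \<subseteq> fam Y k" and Y: "finite Y" and D: "D \<in> ush Y F"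
  obtain S x where S: "S \<in> F" "x \<in> Y" "x \<notin> S" "D = insert x S" using D by (rule ushE) blast
  have "S \<subseteq> Y" "card S = k" using S F unfolding fam_def by auto
  moreover have "finite S" using \<open>S \<subseteq> Y\<close> Y by (rule finite_subset)
  ultimately show "D \<in> fam Y (Suc k)" using S unfolding fam_def by auto
qed

lemma final_ush: assumes Y: "finite Y" and B: "final Y k B"
  shows "final Y (Suc k) (ush Y B)"
  unfolding final_def
proof (intro conjI ballI impI)
  show "ush Y B \<subseteq> fam Y (Suc k)" using B Y ush_fam unfolding final_def by blast
  fix D E assume D: "D \<in> ush Y B" and E: "E \<in> fam Y (Suc k)" and lt: "val D < val E"
  obtain A x where A: "A \<in> B" "x \<in> Y" "x \<notin> A" "D = insert x A"
    using D by (rule ushE) blast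
  have AF: "A \<in> fam Y k" using A B unfolding final_def by auto
  have fA: "finite A" using fam_mem_finite[OF Y AF] .
  have fE: "finite E" using fam_mem_finite[OF Y E] .
  have cA: "card A = k" and cE: "card E = Suc k" and EY: "E \<subseteq> Y"
    using AF E unfolding fam_def by auto
  have "val A < val D" using A(3,4) val_insert[OF fA A(3)] by simp
  then have ltAE: "val A < val E" using lt by simp
  then have AE: "A \<noteq> E" by auto
  let ?S = "(A - E) \<union> (E - A)"
  define n0 where "n0 = Max ?S"
  have n0E: "n0 \<in> E" "n0 \<notin> A"
  proof -
    have "n0 \<in> E" using val_less_iff[OF fA fE AE] ltAE n0_def by simp
    moreover have "n0 \<in> ?S" unfolding n0_def using AE fA fE by (intro Max_in) auto
    ultimately show "n0 \<in> E" "n0 \<notin> A" by auto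
  qed
  have agree: "z \<in> A \<longleftrightarrow> z \<in> E" if "n0 < z" for z
  proof (rule ccontr)
    assume "\<not> (z \<in> A \<longleftrightarrow> z \<in> E)"
    then have "z \<in> ?S" by auto
    then have "z \<le> n0" unfolding n0_def using fA fE by simp
    then show False using that by simp
  qed
  show "E \<in> ush Y B"
  proof (cases "\<exists>y\<in>E. y < n0")
    case True
    then obtain y where y: "y \<in> E" "y < n0" by blast
    let ?E' = "E - {y}"
    have fE': "finite ?E'" using fE by simp
    have AE': "A \<noteq> ?E'" using n0E y by auto
    have "Max ((A - ?E') \<union> (?E' - A)) = n0"
    proof (rule Max_eqI)
      show "finite ((A - ?E') \<union> (?E' - A))" using fA fE by simp
      show "n0 \<in> (A - ?E') \<union> (?E' - A)" using n0E y by auto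
      fix z assume z: "z \<in> (A - ?E') \<union> (?E' - A)"
      show "z \<le> n0"
      proof (rule ccontr)
        assume "\<not> z \<le> n0"
        then have "n0 < z" by simp
        then show False using agree[of z] z y by auto
      qed
    qed
    then have "val A < val ?E'" using val_less_iff[OF fA fE' AE'] n0E y by simp
    moreover have "?E' \<in> fam Y k" using cE EY y fE unfolding fam_def by auto
    ultimately have "?E' \<in> B" using A(1) B unfolding final_def by blast
    moreover have "E = insert y ?E'" using y by auto
    ultimately show ?thesis using ushI[of ?E' B y Y] y EY by auto
  next
    case False
    have sub: "E - {n0} \<subseteq> A"
    proof
      fix z assume z: "z \<in> E - {n0}"
      then have "n0 \<le> z" using False by auto
      then have "n0 < z" using z by auto
      then show "z \<in> A" using agree z by auto
    qed
    have "card (E - {n0}) = k" using cE n0E fE by simp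
    then have "E - {n0} = A" using card_subset_eq[OF fA sub] cA by simp
    then have "E = insert n0 A" using n0E by auto
    then show ?thesis using ushI[OF A(1), of n0 Y] n0E EY by auto
  qed
qed

lemma ush_decomp:
  assumes X: "finite X" and i: "i \<in> X" and H: "H \<subseteq> Pow X"
  shows "card (ush X H) = card (ush (X - {i}) {S\<in>H. i \<notin> S})
           + card ({S\<in>H. i \<notin> S} \<union> ush (X - {i}) {S. i \<notin> S \<and> insert i S \<in> H})"
proof -
  let ?Y = "X - {i}"
  let ?H0 = "{S\<in>H. i \<notin> S}"
  let ?H1 = "{S. i \<notin> S \<and> insert i S \<in> H}"
  let ?P = "?H0 \<union> ush ?Y ?H1"
  have eq: "ush X H = ush ?Y ?H0 \<union> insert i ` ?P"
  proof (rule set_eqI, rule iffI)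
    fix D assume "D \<in> ush X H"
    then obtain S x where S: "S \<in> H" "x \<in> X" "x \<notin> S" "D = insert x S" by (rule ushE) blast
    show "D \<in> ush ?Y ?H0 \<union> insert i ` ?P"
    proof (cases "i \<in> S")
      case True
      let ?S' = "S - {i}"
      have "?S' \<in> ?H1" using S True by (simp add: insert_absorb)
      then have "insert x ?S' \<in> ush ?Y ?H1" using S True by (intro ushI) auto
      moreover have "D = insert i (insert x ?S')" using S True by auto
      ultimately show ?thesis by blast
    next
      case False
      show ?thesis
      proof (cases "x = i")
        case True then show ?thesis using S False by auto
      next
        case xi: False
        have "D \<in> ush ?Y ?H0" using S False xi by (intro ushI[of S ?H0 x ?Y, folded S(4)]) auto
        then show ?thesis by blast
      qed
    qed
  next
    fix D assume "D \<in> ush ?Y ?H0 \<union> insert i ` ?P"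
    then consider "D \<in> ush ?Y ?H0" | S where "S \<in> ?H0" "D = insert i S"
      | E where "E \<in> ush ?Y ?H1" "D = insert i E" by blast
    then show "D \<in> ush X H"
    proof cases
      case 1 then show ?thesis using ush_mono[of ?H0 H] unfolding ush_def by blast
    next
      case 2 then show ?thesis using i by (auto intro: ushI)
    next
      case 3
      obtain S x where S: "S \<in> ?H1" "x \<in> ?Y" "x \<notin> S" "E = insert x S"
        using 3(1) by (rule ushE) blast
      have "insert x (insert i S) \<in> ush X H" using S by (intro ushI) auto
      moreover have "D = insert x (insert i S)" using 3 S by auto
      ultimately show ?thesis by simp
    qed
  qed
  have finH: "finite H" using H X finite_subset[of H "Pow X"] by simp
  have H0P: "?H0 \<subseteq> Pow X" using H by auto
  have H1P: "?H1 \<subseteq> Pow X" using H by auto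
  have f1: "finite (ush ?Y ?H0)"
  proof -
    have "?H0 \<subseteq> Pow ?Y" using H by auto
    then have "ush ?Y ?H0 \<subseteq> Pow ?Y" by (rule ush_Pow)
    moreover have "finite (Pow ?Y)" using X by simp
    ultimately show ?thesis by (rule finite_subset)
  qed
  have Pfin: "finite ?P"
  proof -
    have "?H0 \<subseteq> Pow X" by (rule H0P)
    moreover have "ush ?Y ?H1 \<subseteq> Pow X" using ush_Pow[of ?H1 X] H1P ush_def by auto
    ultimately have "?P \<subseteq> Pow X" by blast
    moreover have "finite (Pow X)" using X by simp
    ultimately show ?thesis by (rule finite_subset)
  qed
  have noi1: "i \<notin> D" if Dm: "D \<in> ush ?Y ?H1" for D
  proof -
    obtain S x where "S \<in> ?H1" "x \<in> ?Y" "x \<notin> S" "D = insert x S" using Dm by (rule ushE)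
    then show ?thesis by simp
  qed
  have noi: "i \<notin> D" if Dm: "D \<in> ?P" for D
  proof -
    from Dm consider "D \<in> ?H0" | "D \<in> ush ?Y ?H1" by blast
    then show ?thesis
    proof cases
      case 1 then show ?thesis by simp
    next
      case 2 then show ?thesis by (rule noi1)
    qed
  qed
  have inj: "inj_on (insert i) ?P"
  proof (rule inj_onI)
    fix A B assume A: "A \<in> ?P" and B: "B \<in> ?P" and AB: "insert i A = insert i B"
    have iA: "i \<notin> A" by (rule noi[OF A])
    have iB: "i \<notin> B" by (rule noi[OF B])
    have "A = insert i A - {i}" using iA by simp
    also have "\<dots> = insert i B - {i}" using AB by simp
    also have "\<dots> = B" using iB by simp
    finally show "A = B" .
  qed
  have noi0: "i \<notin> D" if Dm: "D \<in> ush ?Y ?H0" for D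
  proof -
    obtain S x where "S \<in> ?H0" "x \<in> ?Y" "x \<notin> S" "D = insert x S" using Dm by (rule ushE)
    then show ?thesis by simp
  qed
  have disj: "ush ?Y ?H0 \<inter> insert i ` ?P = {}" using noi0 by blast
  have "card (ush X H) = card (ush ?Y ?H0) + card (insert i ` ?P)"
    unfolding eq by (rule card_Un_disjoint[OF f1 _ disj]) (use Pfin in simp)
  also have "card (insert i ` ?P) = card ?P" by (rule card_image[OF inj])
  finally show ?thesis .
qed

lemma card_decomp:
  assumes X: "finite X" and H: "H \<subseteq> Pow X"
  shows "card H = card {S\<in>H. i \<notin> S} + card {S. i \<notin> S \<and> insert i S \<in> H}"
proof -
  let ?H0 = "{S\<in>H. i \<notin> S}"
  let ?H1 = "{S. i \<notin> S \<and> insert i S \<in> H}"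
  have eq: "H = ?H0 \<union> insert i ` ?H1"
  proof (rule set_eqI, rule iffI)
    fix S assume "S \<in> H"
    then show "S \<in> ?H0 \<union> insert i ` ?H1"
      by (cases "i \<in> S") (auto simp: image_iff insert_absorb intro!: exI[of _ "S - {i}"])
  qed auto
  have finH: "finite H" using H X finite_subset[of H "Pow X"] by simp
  have f1: "finite (insert i ` ?H1)" using eq finH by (metis finite_Un)
  have inj: "inj_on (insert i) ?H1"
    by (rule inj_onI) (metis (no_types, lifting) Diff_insert_absorb mem_Collect_eq)
  have "card H = card ?H0 + card (insert i ` ?H1)"
    by (subst eq, rule card_Un_disjoint) (use finH f1 in auto)
  also have "card (insert i ` ?H1) = card ?H1" using card_image[OF inj] .
  finally show ?thesis .
qed

lemma ush_empty[simp]: "ush Y {} = {}" unfolding ush_def by auto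

lemma fam_mono: "Y \<subseteq> X \<Longrightarrow> fam Y k \<subseteq> fam X k" unfolding fam_def by auto

lemma main_comb:
  assumes X: "finite X" and i: "i \<in> X" and M: "M \<subseteq> fam X d"
    and A0: "A0 \<subseteq> fam (X - {i}) d" and cA0: "card A0 = card {S\<in>M. i \<notin> S}"
    and lt: "card (ush (X - {i}) A0) < card (ush (X - {i}) {S\<in>M. i \<notin> S})"
  shows "\<exists>G. G \<subseteq> fam X d \<and> card G = card M \<and> card (ush X G) < card (ush X M)"
proof -
  define Y where "Y = X - {i}"
  define M0 where "M0 = {S\<in>M. i \<notin> S}"
  define M1 where "M1 = {S. i \<notin> S \<and> insert i S \<in> M}"
  have Yf: "finite Y" using X Y_def by simp
  have MP: "M \<subseteq> Pow X" using M unfolding fam_def by auto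
  have M0Y: "M0 \<subseteq> fam Y d" using M unfolding M0_def Y_def fam_def by auto
  have M1Y: "M1 \<subseteq> fam Y (d - 1)"
  proof
    fix S assume S: "S \<in> M1"
    then have iS: "i \<notin> S" and SM: "insert i S \<in> M" unfolding M1_def by auto
    then have "insert i S \<subseteq> X" "card (insert i S) = d" using M unfolding fam_def by auto
    moreover have "finite S" using \<open>insert i S \<subseteq> X\<close> X by (meson finite_subset subset_insertI2 subset_refl insert_subset)
    ultimately show "S \<in> fam Y (d - 1)" using iS unfolding fam_def Y_def by auto
  qed
  have M1d: "M1 \<noteq> {} \<Longrightarrow> d \<noteq> 0"
  proof -
    assume "M1 \<noteq> {}"
    then obtain S where "S \<in> M1" by blast
    then have "insert i S \<in> M" unfolding M1_def by auto
    then have "insert i S \<subseteq> X" "card (insert i S) = d" using M unfolding fam_def by auto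
    then show "d \<noteq> 0" using X by (metis card_0_eq finite_subset insert_not_empty)
  qed
  obtain A where A: "final Y d A" "card A = card A0" "card (ush Y A) \<le> card (ush Y A0)"
    using kk_exists[OF Yf] A0 unfolding Y_def by blast
  have AY: "A \<subseteq> fam Y d" using A(1) unfolding final_def by simp
  have fM0: "finite M0" using M0Y fam_finite[OF Yf] by (rule finite_subset)
  have fM1: "finite M1" using M1Y fam_finite[OF Yf] by (rule finite_subset)
  have fuM1: "finite (ush Y M1)" using ush_fam[OF M1Y Yf] fam_finite[OF Yf] by (rule finite_subset)
  obtain B where B: "B \<subseteq> fam Y (d - 1)" "card B = card M1"
     "card (A \<union> ush Y B) \<le> card (M0 \<union> ush Y M1)" "M1 = {} \<Longrightarrow> B = {}"
  proof (cases "M1 = {}")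
    case True
    have "card A \<le> card (M0 \<union> ush Y M1)"
      using A(2) cA0 card_mono[of "M0 \<union> ush Y M1" M0] fM0 fuM1 unfolding M0_def by auto
    then show ?thesis using that[of "{}"] True by auto
  next
    case False
    then obtain d' where d': "d = Suc d'" using M1d by (cases d) auto
    obtain B where B: "final Y d' B" "card B = card M1" "card (ush Y B) \<le> card (ush Y M1)"
      using kk_exists[OF Yf, of M1 d'] M1Y d' by auto
    have "final Y d (ush Y B)" using final_ush[OF Yf B(1)] d' by simp
    then have "card (A \<union> ush Y B) = max (card A) (card (ush Y B))"
      by (rule final_card_Un[OF Yf A(1)])
    also have "\<dots> \<le> max (card M0) (card (ush Y M1))" using A(2) cA0 B(3) unfolding M0_def by simp
    also have "\<dots> \<le> card (M0 \<union> ush Y M1)"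
      using card_mono[of "M0 \<union> ush Y M1" M0] card_mono[of "M0 \<union> ush Y M1" "ush Y M1"] fM0 fuM1 by auto
    finally show ?thesis using that[of B] B d' False unfolding final_def by auto
  qed
  define G where "G = A \<union> insert i ` B"
  have AnoI: "\<forall>S\<in>A. i \<notin> S" using AY unfolding fam_def Y_def by auto
  have BnoI: "\<forall>S\<in>B. i \<notin> S" using B(1) unfolding fam_def Y_def by auto
  have G0: "{S\<in>G. i \<notin> S} = A" unfolding G_def using AnoI by auto
  have G1: "{S. i \<notin> S \<and> insert i S \<in> G} = B"
  proof (rule set_eqI, rule iffI)
    fix S assume "S \<in> {S. i \<notin> S \<and> insert i S \<in> G}"
    then have iS: "i \<notin> S" and SG: "insert i S \<in> G" by auto
    have "insert i S \<notin> A" using AnoI by auto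
    then obtain S' where S': "S' \<in> B" "insert i S = insert i S'" using SG unfolding G_def by auto
    have "S = insert i S - {i}" using iS by simp
    also have "\<dots> = insert i S' - {i}" using S'(2) by simp
    also have "\<dots> = S'" using BnoI S'(1) by simp
    finally show "S \<in> B" using S'(1) by simp
  next
    fix S assume "S \<in> B" then show "S \<in> {S. i \<notin> S \<and> insert i S \<in> G}"
      using BnoI unfolding G_def by auto
  qed
  have GX: "G \<subseteq> fam X d"
  proof
    fix S assume "S \<in> G"
    then consider "S \<in> A" | T where "T \<in> B" "S = insert i T" unfolding G_def by auto
    then show "S \<in> fam X d"
    proof cases
      case 1 then show ?thesis using AY fam_mono[of Y X d] Y_def by auto
    next
      case 2
      have "B \<noteq> {}" using 2 by auto
      then have "d \<noteq> 0" using B(4) M1d by auto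
      have "T \<subseteq> Y" "card T = d - 1" using 2 B(1) unfolding fam_def by auto
      moreover have "finite T" using \<open>T \<subseteq> Y\<close> Yf by (rule finite_subset)
      moreover have "i \<notin> T" using \<open>T \<subseteq> Y\<close> Y_def by auto
      ultimately show ?thesis using 2 i \<open>d \<noteq> 0\<close> unfolding fam_def Y_def by auto
    qed
  qed
  have GP: "G \<subseteq> Pow X" using GX unfolding fam_def by auto
  have "card G = card A + card B" using card_decomp[OF X GP, of i] G0 G1 by simp
  also have "\<dots> = card M0 + card M1" using A(2) cA0 B(2) unfolding M0_def by simp
  also have "\<dots> = card M" using card_decomp[OF X MP, of i] unfolding M0_def M1_def by simp
  finally have cG: "card G = card M" .
  have "card (ush X G) = card (ush Y A) + card (A \<union> ush Y B)"
    using ush_decomp[OF X i GP] G0 G1 unfolding Y_def by simp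
  also have "\<dots> < card (ush Y M0) + card (M0 \<union> ush Y M1)"
    using A(3) B(3) lt unfolding Y_def M0_def by simp
  also have "\<dots> = card (ush X M)"
    using ush_decomp[OF X i MP] unfolding Y_def M0_def M1_def by simp
  finally show ?thesis using GX cG by blast
qed

interpretation K: vector_space "fscale :: 'k::field \<Rightarrow> 'k elt \<Rightarrow> 'k elt"
  by (rule vector_space_fscale)

lemma fscale_apply[simp]: "fscale c f T = c * f T" by (simp add: fscale_def)

lemma sum_fun_apply: "(\<Sum>w\<in>t. f w) (T::nat set) = (\<Sum>w\<in>t. (f w T :: 'k::field))"
  by (induction t rule: infinite_finite_induct) auto

lemma mono_apply: "mono S T = (if T = S then 1 else 0)" by (simp add: mono_def)

lemma mono_inj: "inj (mono :: nat set \<Rightarrow> 'k::field elt)"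
proof (rule injI)
  fix S T assume "(mono S :: 'k elt) = mono T"
  then have "(mono S :: 'k elt) S = mono T S" by simp
  then show "S = T" by (simp add: mono_def split: if_splits)
qed

lemma mono_eq: "((mono T :: 'k::field elt) = mono S) \<longleftrightarrow> T = S"
proof
  assume "(mono T :: 'k elt) = mono S"
  then have "(mono T :: 'k elt) S = mono S S" by simp
  then show "T = S" by (simp add: mono_def split: if_splits)
qed simp

lemma Rdeg_subspace: "ksubspace (Rdeg X d :: 'k::field elt set)"
proof (rule K.subspaceI)
  show "0 \<in> (Rdeg X d :: 'k elt set)" unfolding Rdeg_def by simp
  fix f g :: "'k elt" assume f: "f \<in> Rdeg X d" and g: "g \<in> Rdeg X d"
  show "f + g \<in> Rdeg X d" unfolding Rdeg_def
  proof (intro allI impI CollectI)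
    fix S assume "(f + g) S \<noteq> 0"
    then have "f S \<noteq> 0 \<or> g S \<noteq> 0" by auto
    then show "S \<subseteq> X \<and> card S = d" using f g unfolding Rdeg_def by auto
  qed
next
  fix c and f :: "'k elt" assume f: "f \<in> Rdeg X d"
  show "fscale c f \<in> Rdeg X d" using f unfolding Rdeg_def by auto
qed

lemma mono_Rdeg: "S \<in> fam X d \<Longrightarrow> (mono S :: 'k::field elt) \<in> Rdeg X d"
  unfolding Rdeg_def fam_def mono_def by auto

lemma mono_indep: "K.independent (mono ` M :: 'k::field elt set)"
  unfolding K.independent_explicit_module
proof (intro allI impI)
  fix t u v assume t: "finite t" "t \<subseteq> mono ` M" and s: "(\<Sum>v\<in>t. fscale (u v) v) = (0::'k elt)"
    and v: "v \<in> t"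
  obtain S where S: "v = mono S" using v t by auto
  have "0 = (\<Sum>w\<in>t. fscale (u w) w) S" using s by simp
  also have "\<dots> = (\<Sum>w\<in>t. u w * w S)" by (simp add: sum_fun_apply)
  also have "\<dots> = (\<Sum>w\<in>t. if w = v then u w else 0)"
  proof (rule sum.cong[OF refl])
    fix w assume "w \<in> t"
    then obtain T where T: "w = mono T" using t by auto
    show "u w * w S = (if w = v then u w else 0)"
    proof -
      have "w = v \<longleftrightarrow> T = S" using S T by (simp add: mono_eq)
      then show ?thesis using T by (auto simp: mono_def)
    qed
  qed
  also have "\<dots> = u v" using t v by (simp add: sum.delta')
  finally show "u v = 0" by simp
qed

lemma dim_mono_span: "finite M \<Longrightarrow> kdim (kspan (mono ` M :: 'k::field elt set)) = card M"
proof -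
  have "kdim (kspan (mono ` M :: 'k elt set)) = card (mono ` M :: 'k elt set)"
    by (rule K.dim_span_eq_card_independent[OF mono_indep])
  also have "\<dots> = card M" by (rule card_image[OF inj_on_subset[OF mono_inj subset_UNIV]])
  finally show ?thesis .
qed

lemma mono_in_span_iff: "((mono S :: 'k::field elt) \<in> kspan (mono ` M)) \<longleftrightarrow> S \<in> M"
proof
  assume a: "(mono S :: 'k elt) \<in> kspan (mono ` M)"
  show "S \<in> M"
  proof (rule ccontr)
    assume nS: "S \<notin> M"
    have "kspan (mono ` M) \<subseteq> {f :: 'k elt. f S = 0}"
      by (rule K.span_minimal) (use nS in \<open>auto simp: mono_def K.subspace_def\<close>)
    then show False using a by (auto simp: mono_def)
  qed
qed (simp add: K.span_base)

lemma mulvar_mono: "mulvar j (mono S :: 'k::field elt) = (if j \<in> S then 0 else mono (insert j S))"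
  unfolding mulvar_def mono_def by (auto simp: fun_eq_iff)

lemma mulvar_add: "mulvar j (f + g) = mulvar j f + mulvar j g"
  unfolding mulvar_def by (auto simp: fun_eq_iff)

lemma mulvar_scale: "mulvar j (fscale c f) = fscale c (mulvar j f)"
  unfolding mulvar_def by (auto simp: fun_eq_iff)

lemma mulvar_zero: "mulvar j 0 = 0"
  unfolding mulvar_def by (auto simp: fun_eq_iff)

lemma mulvar_span: assumes f: "f \<in> kspan S" shows "mulvar j (f :: 'k::field elt) \<in> kspan (mulvar j ` S)"
proof -
  have sub: "ksubspace {f :: 'k elt. mulvar j f \<in> kspan (mulvar j ` S)}" unfolding K.subspace_def
    by (auto simp: mulvar_add mulvar_scale mulvar_zero intro: K.span_add K.span_scale K.span_zero)
  show ?thesis using K.span_induct[OF f sub] by (simp add: K.span_base)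
qed

lemma m1_mono: "m1 X (kspan (mono ` M) :: 'k::field elt set) = kspan (mono ` ush X M)"
proof (rule antisym)
  show "m1 X (kspan (mono ` M)) \<subseteq> (kspan (mono ` ush X M) :: 'k elt set)"
    unfolding m1_def
  proof (rule K.span_minimal)
    show "(\<Union>j\<in>X. mulvar j ` kspan (mono ` M)) \<subseteq> (kspan (mono ` ush X M) :: 'k elt set)"
    proof clarify
      fix j f assume j: "j \<in> X" and f: "(f :: 'k elt) \<in> kspan (mono ` M)"
      have "mulvar j f \<in> kspan (mulvar j ` mono ` M)" by (rule mulvar_span[OF f])
      also have "\<dots> \<subseteq> kspan (mono ` ush X M)"
      proof (rule K.span_minimal)
        show "mulvar j ` mono ` M \<subseteq> (kspan (mono ` ush X M) :: 'k elt set)"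
        proof clarify
          fix S assume S: "S \<in> M"
          show "mulvar j (mono S :: 'k elt) \<in> kspan (mono ` ush X M)"
          proof (cases "j \<in> S")
            case True then show ?thesis by (simp add: mulvar_mono K.span_zero)
          next
            case False
            have "insert j S \<in> ush X M" using ushI[OF S j False] .
            then show ?thesis using False by (simp add: mulvar_mono K.span_base)
          qed
        qed
      qed simp
      finally show "mulvar j f \<in> kspan (mono ` ush X M)" .
    qed
  qed simp
  show "kspan (mono ` ush X M) \<subseteq> m1 X (kspan (mono ` M) :: 'k elt set)"
    unfolding m1_def
  proof (rule K.span_minimal)
    show "mono ` ush X M \<subseteq> kspan (\<Union>j\<in>X. mulvar j ` kspan (mono ` M :: 'k elt set))"
    proof clarify
      fix D assume "D \<in> ush X M"
      then obtain S x where S: "S \<in> M" "x \<in> X" "x \<notin> S" "D = insert x S" by (rule ushE)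
      have "(mono D :: 'k elt) = mulvar x (mono S)" using S by (simp add: mulvar_mono)
      moreover have "(mono S :: 'k elt) \<in> kspan (mono ` M)" using S by (simp add: K.span_base)
      ultimately show "(mono D :: 'k elt) \<in> kspan (\<Union>j\<in>X. mulvar j ` kspan (mono ` M))"
        using S(2) by (intro K.span_base) blast
    qed
  qed simp
qed

lemma card_le_dim:
  assumes B: "K.independent (B :: 'k::field elt set)" "B \<subseteq> V" and V: "V \<subseteq> kspan W" "finite W"
  shows "card B \<le> kdim V"
proof -
  obtain A where A: "A \<subseteq> V" "K.independent A" "V \<subseteq> kspan A" "card A = kdim V"
    using K.basis_exists by blast
  have fA: "finite A" using K.independent_span_bound[OF V(2) A(2)] A(1) V(1) by blast
  have "card B \<le> card A" using K.independent_span_bound[OF fA B(1)] B(2) A(3) by blast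
  then show ?thesis using A(4) by simp
qed

lemma dim_le_fin:
  assumes "S \<subseteq> T" "T \<subseteq> kspan W" "finite (W :: 'k::field elt set)"
  shows "kdim S \<le> kdim T"
proof -
  obtain A where A: "A \<subseteq> S" "K.independent A" "S \<subseteq> kspan A" "card A = kdim S"
    using K.basis_exists by blast
  have "card A \<le> kdim T" by (rule card_le_dim[OF A(2) _ assms(2,3)]) (use A(1) assms(1) in auto)
  then show ?thesis using A(4) by simp
qed

lemma supp_span: assumes "finite I" "\<forall>S. f S \<noteq> 0 \<longrightarrow> S \<in> I"
  shows "(f :: 'k::field elt) \<in> kspan (mono ` I)"
proof -
  have "f = (\<Sum>S\<in>I. fscale (f S) (mono S))"
  proof (rule ext)
    fix T
    have "(\<Sum>S\<in>I. fscale (f S) (mono S)) T = (\<Sum>S\<in>I. f S * mono S T)"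
      by (simp add: sum_fun_apply)
    also have "\<dots> = (\<Sum>S\<in>I. if S = T then f T else 0)"
      by (rule sum.cong) (auto simp: mono_def)
    also have "\<dots> = (if T \<in> I then f T else 0)" using assms(1) by (simp add: sum.delta)
    also have "\<dots> = f T" using assms(2) by auto
    finally show "f T = (\<Sum>S\<in>I. fscale (f S) (mono S)) T" by simp
  qed
  also have "\<dots> \<in> kspan (mono ` I)"
    by (intro K.span_sum K.span_scale K.span_base) auto
  finally show ?thesis .
qed

lemma Rdeg_span: "finite X \<Longrightarrow> (Rdeg X d :: 'k::field elt set) \<subseteq> kspan (mono ` fam X d)"
  by (auto intro!: supp_span fam_finite simp: Rdeg_def fam_def)

lemma val_sub_le: "finite Y \<Longrightarrow> T \<subseteq> Y \<Longrightarrow> val T \<le> val Y"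
  unfolding val_def by (rule sum_mono2) auto

definition lt :: "'k::field elt \<Rightarrow> nat set" where
  "lt f = (THE S. f S \<noteq> 0 \<and> (\<forall>T. f T \<noteq> 0 \<longrightarrow> val T \<le> val S))"

lemma Rdeg_supp: "f \<in> Rdeg Y k \<Longrightarrow> f T \<noteq> 0 \<Longrightarrow> T \<in> fam Y k"
  unfolding Rdeg_def fam_def by auto

lemma lt_ex:
  assumes Y: "finite Y" and f: "f \<in> Rdeg Y k" and f0: "f \<noteq> 0"
  shows "f (lt f) \<noteq> 0 \<and> (\<forall>T. f T \<noteq> 0 \<longrightarrow> val T \<le> val (lt f)) \<and> lt f \<in> fam Y k"
proof -
  obtain S0 where S0: "f S0 \<noteq> 0" using f0 by (auto simp: fun_eq_iff)
  have bnd: "\<forall>y. f y \<noteq> 0 \<longrightarrow> val y < val Y + 1"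
    using Rdeg_supp[OF f] val_sub_le[OF Y] unfolding fam_def by (simp add: le_imp_less_Suc)
  obtain S where S: "f S \<noteq> 0" "\<forall>T. f T \<noteq> 0 \<longrightarrow> val T \<le> val S"
    using Lattices_Big.ex_has_greatest_nat[of "\<lambda>S. f S \<noteq> 0" S0 val "val Y + 1", OF S0 bnd] by blast
  have "lt f = S" unfolding lt_def
  proof (rule the_equality)
    show "f S \<noteq> 0 \<and> (\<forall>T. f T \<noteq> 0 \<longrightarrow> val T \<le> val S)" using S by blast
    fix S' assume S': "f S' \<noteq> 0 \<and> (\<forall>T. f T \<noteq> 0 \<longrightarrow> val T \<le> val S')"
    then have "val S' = val S" using S by (meson le_antisym)
    moreover have "finite S" "finite S'" using Rdeg_supp[OF f] S S' fam_mem_finite[OF Y] by blast+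
    ultimately show "S' = S" using val_inj by blast
  qed
  then show ?thesis using S Rdeg_supp[OF f S(1)] by simp
qed

lemma lt_eqI:
  assumes Y: "finite Y" and f: "f \<in> Rdeg Y k" and S: "f S \<noteq> 0" and mx: "\<forall>T. f T \<noteq> 0 \<longrightarrow> val T \<le> val S"
  shows "lt f = S"
proof -
  have f0: "f \<noteq> 0" using S by auto
  note L = lt_ex[OF Y f f0]
  have "val (lt f) = val S" using L mx S by (meson le_antisym)
  moreover have "finite S" "finite (lt f)" using Rdeg_supp[OF f] S L fam_mem_finite[OF Y] by blast+
  ultimately show ?thesis using val_inj by blast
qed

lemma lt_zero_above:
  assumes Y: "finite Y" and f: "f \<in> Rdeg Y k" and lt: "val (lt f) < val T"
  shows "f T = 0"
proof (cases "f = 0")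
  case False
  then show ?thesis using lt_ex[OF Y f False] lt by (meson leD)
qed simp

definition inl :: "'k::field elt set \<Rightarrow> nat set set" where
  "inl U = lt ` (U - {0})"

lemma inl_fam: "finite Y \<Longrightarrow> U \<subseteq> Rdeg Y k \<Longrightarrow> inl U \<subseteq> fam Y k"
  unfolding inl_def using lt_ex by blast

definition gsel :: "'k::field elt set \<Rightarrow> nat set \<Rightarrow> 'k elt" where
  "gsel U T = (SOME f. f \<in> U \<and> f \<noteq> 0 \<and> lt f = T)"

lemma gsel: assumes "T \<in> inl U" shows "gsel U T \<in> U \<and> gsel U T \<noteq> 0 \<and> lt (gsel U T) = T"
proof -
  have "\<exists>f. f \<in> U \<and> f \<noteq> 0 \<and> lt f = T" using assms unfolding inl_def by blast
  then show ?thesis unfolding gsel_def by (rule someI_ex)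
qed

lemma span_echelon:
  assumes Y: "finite Y" and U: "ksubspace U" "U \<subseteq> (Rdeg Y k :: 'k::field elt set)"
  shows "U \<subseteq> kspan (gsel U ` inl U)"
proof -
  let ?B = "kspan (gsel U ` inl U)"
  have claim: "\<forall>u\<in>U. (\<forall>T. u T \<noteq> 0 \<longrightarrow> val T < N) \<longrightarrow> u \<in> ?B" for N
  proof (induction N)
    case 0
    show ?case
    proof (intro ballI impI)
      fix u assume "u \<in> U" "\<forall>T. u T \<noteq> (0::'k) \<longrightarrow> val T < 0"
      then have "u = 0" by (auto simp: fun_eq_iff)
      then show "u \<in> ?B" by (simp add: K.span_zero)
    qed
  next
    case (Suc N)
    show ?case
    proof (intro ballI impI)
      fix u assume uU: "u \<in> U" and sup: "\<forall>T. u T \<noteq> (0::'k) \<longrightarrow> val T < Suc N"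
      show "u \<in> ?B"
      proof (cases "u = 0")
        case True then show ?thesis by (simp add: K.span_zero)
      next
        case u0: False
        have uR: "u \<in> Rdeg Y k" using uU U by auto
        note L = lt_ex[OF Y uR u0]
        define T0 where "T0 = lt u"
        show ?thesis
        proof (cases "val T0 < N")
          case True
          have "\<forall>T. u T \<noteq> 0 \<longrightarrow> val T < N" using L True T0_def by (meson le_less_trans)
          then show ?thesis using Suc.IH uU by blast
        next
          case False
          have "val T0 < Suc N" using sup L T0_def by blast
          then have vT0: "val T0 = N" using False by linarith
          have T0I: "T0 \<in> inl U" unfolding inl_def T0_def using uU u0 by auto
          define f where "f = gsel U T0"
          have f: "f \<in> U" "f \<noteq> 0" "lt f = T0" using gsel[OF T0I] f_def by auto
          have fR: "f \<in> Rdeg Y k" using f U by auto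
          note Lf = lt_ex[OF Y fR f(2)]
          define c where "c = u T0 / f T0"
          define u' where "u' = u - fscale c f"
          have u'U: "u' \<in> U" unfolding u'_def using uU f(1) U(1)
            by (intro K.subspace_diff K.subspace_scale) auto
          have "\<forall>T. u' T \<noteq> 0 \<longrightarrow> val T < N"
          proof (intro allI impI)
            fix T assume T: "u' T \<noteq> 0"
            then have "u T \<noteq> 0 \<or> f T \<noteq> 0" unfolding u'_def by auto
            then have le: "val T \<le> N" and fT': "T \<in> fam Y k"
              using L Lf f(3) T0_def vT0 Rdeg_supp[OF uR] Rdeg_supp[OF fR]
              by auto
            have fT: "finite T" using fam_mem_finite[OF Y fT'] .
            have "T \<noteq> T0"
            proof
              assume "T = T0"
              then have "u' T = u T0 - c * f T0" unfolding u'_def by simp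
              also have "\<dots> = 0" unfolding c_def using Lf f(3) by simp
              finally show False using T by simp
            qed
            moreover have "finite T0" using L T0_def fam_mem_finite[OF Y] by blast
            ultimately have "val T \<noteq> val T0" using val_inj fT by blast
            then show "val T < N" using le vT0 by simp
          qed
          then have "u' \<in> ?B" using Suc.IH u'U by blast
          moreover have "f \<in> ?B" unfolding f_def using T0I by (intro K.span_base) auto
          ultimately have "u' + fscale c f \<in> ?B" by (intro K.span_add K.span_scale)
          moreover have "u' + fscale c f = u" unfolding u'_def by (simp add: fun_eq_iff)
          ultimately show ?thesis by simp
        qed
      qed
    qed
  qed
  show ?thesis
  proof
    fix u assume uU: "u \<in> U"
    have "\<forall>T. u T \<noteq> 0 \<longrightarrow> val T < val Y + 1"
      using Rdeg_supp[of u Y k] uU U val_sub_le[OF Y] unfolding fam_def by (auto simp: le_imp_less_Suc)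
    then show "u \<in> ?B" using claim uU by blast
  qed
qed

lemma dim_le_inl:
  assumes Y: "finite Y" and U: "ksubspace U" "U \<subseteq> (Rdeg Y k :: 'k::field elt set)"
  shows "kdim U \<le> card (inl U)"
proof -
  have fI: "finite (inl U)" using inl_fam[OF Y U(2)] fam_finite[OF Y] by (rule finite_subset)
  have "kdim U \<le> card (gsel U ` inl U)" by (rule K.dim_le_card[OF span_echelon[OF Y U]]) (use fI in simp)
  also have "\<dots> \<le> card (inl U)" using fI by (rule card_image_le)
  finally show ?thesis .
qed

lemma inl_le_dim:
  assumes Y: "finite Y" and U: "ksubspace U" "U \<subseteq> (Rdeg Y k :: 'k::field elt set)"
  shows "card (inl U) \<le> kdim U"
proof -
  let ?I = "inl U"
  let ?B = "gsel U ` ?I"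
  have fI: "finite ?I" using inl_fam[OF Y U(2)] fam_finite[OF Y] by (rule finite_subset)
  have inj: "inj_on (gsel U) ?I"
    by (rule inj_onI) (metis gsel)
  have BU: "?B \<subseteq> U" using gsel by blast
  have BR: "\<And>w. w \<in> ?B \<Longrightarrow> w \<in> Rdeg Y k" using BU U by blast
  have indep: "K.independent ?B"
    unfolding K.independent_explicit_module
  proof (intro allI impI)
    fix t u v assume t: "finite t" "t \<subseteq> ?B" and s: "(\<Sum>v\<in>t. fscale (u v) v) = (0::'k elt)"
      and v: "v \<in> t"
    show "u v = 0"
    proof (rule ccontr)
      assume uv: "u v \<noteq> 0"
      let ?Z = "{w\<in>t. u w \<noteq> 0}"
      have bnd: "\<forall>w. w \<in> ?Z \<longrightarrow> val (lt w) < val Y + 1"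
      proof (intro allI impI)
        fix w assume "w \<in> ?Z"
        then have "w \<in> ?B" using t by auto
        then obtain T1 where T1: "T1 \<in> ?I" "w = gsel U T1" by auto
        then have "lt w \<in> ?I" using gsel[OF T1(1)] by simp
        then have "lt w \<subseteq> Y" using inl_fam[OF Y U(2)] unfolding fam_def by auto
        then show "val (lt w) < val Y + 1" using val_sub_le[OF Y] by (simp add: le_imp_less_Suc)
      qed
      obtain w0 where w0: "w0 \<in> ?Z" "\<forall>w. w \<in> ?Z \<longrightarrow> val (lt w) \<le> val (lt w0)"
        using Lattices_Big.ex_has_greatest_nat[of "\<lambda>w. w \<in> ?Z" v "\<lambda>w. val (lt w)" "val Y + 1"] v uv bnd
        by auto
      define T0 where "T0 = lt w0"
      have w0B: "w0 \<in> ?B" using w0 t by auto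
      have w00: "w0 T0 \<noteq> 0"
      proof -
        have "w0 \<noteq> 0" using w0B gsel by auto
        then show ?thesis using lt_ex[OF Y BR[OF w0B]] T0_def by blast
      qed
      have "0 = (\<Sum>w\<in>t. fscale (u w) w) T0" using s by simp
      also have "\<dots> = (\<Sum>w\<in>t. u w * w T0)" by (simp add: sum_fun_apply)
      also have "\<dots> = (\<Sum>w\<in>t. if w = w0 then u w0 * w0 T0 else 0)"
      proof (rule sum.cong[OF refl])
        fix w assume wt: "w \<in> t"
        show "u w * w T0 = (if w = w0 then u w0 * w0 T0 else 0)"
        proof (cases "w = w0")
          case False
          show ?thesis
          proof (cases "u w = 0")
            case False': False
            have wB: "w \<in> ?B" using wt t by auto
            have le: "val (lt w) \<le> val T0" using w0 wt False' T0_def by auto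
            obtain T1 where T1: "T1 \<in> ?I" "w = gsel U T1" using wB by auto
            obtain T2 where T2: "T2 \<in> ?I" "w0 = gsel U T2" using w0B by auto
            have lw: "lt w = T1" using gsel[OF T1(1)] T1(2) by simp
            have lw0: "T0 = T2" using gsel[OF T2(1)] T2(2) T0_def by simp
            have ne: "T1 \<noteq> T2" using T1 T2 \<open>w \<noteq> w0\<close> by auto
            have "T1 \<in> fam Y k" "T2 \<in> fam Y k" using T1(1) T2(1) inl_fam[OF Y U(2)] by auto
            then have "finite T1" "finite T2" using fam_mem_finite[OF Y] by auto
            then have "val (lt w) \<noteq> val T0" using ne val_inj lw lw0 by metis
            then have "val (lt w) < val T0" using le by simp
            then have "w T0 = 0" using lt_zero_above[OF Y BR[OF wB]] by blast
            then show ?thesis using False by simp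
          qed (simp add: False)
        qed simp
      qed
      also have "\<dots> = u w0 * w0 T0" using t w0 by (simp add: sum.delta')
      finally show False using w0 w00 by simp
    qed
  qed
  have "card ?I = card ?B" using card_image[OF inj] by simp
  also have "\<dots> \<le> kdim U"
    by (rule card_le_dim[OF indep BU _ finite_imageI[OF fam_finite[OF Y]]]) (use Rdeg_span[OF Y] U in blast)
  finally show ?thesis .
qed

lemma mulvar_Rdeg:
  assumes Y: "finite Y" and j: "j \<in> Y" and f: "f \<in> Rdeg Y d"
  shows "mulvar j (f :: 'k::field elt) \<in> Rdeg Y (Suc d)"
  unfolding Rdeg_def
proof (intro CollectI allI impI)
  fix T assume "mulvar j f T \<noteq> 0"
  then have jT: "j \<in> T" and fT: "f (T - {j}) \<noteq> 0" unfolding mulvar_def by (auto split: if_splits)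
  then have sub: "T - {j} \<subseteq> Y" and c: "card (T - {j}) = d" using f unfolding Rdeg_def by auto
  have fin: "finite (T - {j})" using sub Y by (rule finite_subset)
  have "T = insert j (T - {j})" using jT by auto
  then have "card T = Suc d" using fin c by (metis card_insert_disjoint Diff_iff singletonI)
  moreover have "T \<subseteq> Y" using sub jT j by auto
  ultimately show "T \<subseteq> Y \<and> card T = Suc d" by simp
qed

lemma m1_Rdeg:
  assumes Y: "finite Y" and W: "W \<subseteq> (Rdeg Y d :: 'k::field elt set)"
  shows "m1 Y W \<subseteq> Rdeg Y (Suc d)"
  unfolding m1_def
  by (rule K.span_minimal[OF _ Rdeg_subspace]) (use mulvar_Rdeg[OF Y] W in blast)

lemma ush_inl:
  assumes Y: "finite Y" and W: "W \<subseteq> (Rdeg Y d :: 'k::field elt set)"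
  shows "ush Y (inl W) \<subseteq> inl (m1 Y W)"
proof
  fix D assume "D \<in> ush Y (inl W)"
  then obtain T x where T: "T \<in> inl W" "x \<in> Y" "x \<notin> T" "D = insert x T" by (rule ushE)
  obtain w where w: "w \<in> W" "w \<noteq> 0" "lt w = T" using T(1) unfolding inl_def by auto
  have wR: "w \<in> Rdeg Y d" using w W by auto
  note L = lt_ex[OF Y wR w(2)]
  let ?g = "mulvar x w"
  have gm: "?g \<in> m1 Y W" unfolding m1_def using T(2) w(1) by (intro K.span_base) blast
  have gR: "?g \<in> Rdeg Y (Suc d)" by (rule mulvar_Rdeg[OF Y T(2) wR])
  have gD: "?g D = w T" using T(3,4) unfolding mulvar_def by simp
  have gD0: "?g D \<noteq> 0" using gD L w(3) by simp
  have fT: "finite T" using L w(3) fam_mem_finite[OF Y] by blast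
  have "lt ?g = D"
  proof (rule lt_eqI[OF Y gR gD0], intro allI impI)
    fix T' assume gT': "?g T' \<noteq> 0"
    then have xT': "x \<in> T'" and wT': "w (T' - {x}) \<noteq> 0" unfolding mulvar_def by (auto split: if_splits)
    have le: "val (T' - {x}) \<le> val T" using L wT' w(3) by auto
    have "T' - {x} \<in> fam Y d" using Rdeg_supp[OF wR wT'] .
    then have fin: "finite (T' - {x})" using fam_mem_finite[OF Y] by blast
    have "T' = insert x (T' - {x})" using xT' by auto
    then have "val T' = val (T' - {x}) + 2^x" using val_insert[OF fin] by (metis Diff_iff singletonI)
    moreover have "val D = val T + 2^x" using T(3,4) val_insert[OF fT] by simp
    ultimately show "val T' \<le> val D" using le by simp
  qed
  moreover have "?g \<noteq> 0" using gD0 by auto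
  ultimately show "D \<in> inl (m1 Y W)" using gm unfolding inl_def by force
qed

lemma monomialize:
  assumes Y: "finite Y" and W: "ksubspace W" "W \<subseteq> (Rdeg Y d :: 'k::field elt set)"
  shows "\<exists>A. A \<subseteq> fam Y d \<and> card A = kdim W \<and> card (ush Y A) \<le> kdim (m1 Y W)"
proof -
  let ?I = "inl W"
  have IY: "?I \<subseteq> fam Y d" by (rule inl_fam[OF Y W(2)])
  have "kdim W \<le> card ?I" by (rule dim_le_inl[OF Y W])
  then obtain A where A: "A \<subseteq> ?I" "card A = kdim W" by (meson obtain_subset_with_card_n)
  have m1R: "m1 Y W \<subseteq> Rdeg Y (Suc d)" by (rule m1_Rdeg[OF Y W(2)])
  have fin: "finite (inl (m1 Y W))"
    using inl_fam[OF Y m1R] fam_finite[OF Y] by (rule finite_subset)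
  have "ush Y A \<subseteq> inl (m1 Y W)" using ush_mono[OF A(1)] ush_inl[OF Y W(2)] by blast
  then have "card (ush Y A) \<le> card (inl (m1 Y W))" using fin by (rule card_mono[rotated])
  also have "\<dots> \<le> kdim (m1 Y W)"
    by (rule inl_le_dim[OF Y _ m1R]) (simp add: m1_def)
  finally show ?thesis using A IY by blast
qed

theorem proposition4p5:
  fixes n i d :: nat and V :: "'k::field elt set"
  assumes "i \<in> {1..n}"
    and "monomial_space {1..n} d V"
    and "gotzmann {1..n} d V"
  shows "gotzmann ({1..n} - {i}) d (decomp0 i V)"
proof -
  define X where "X = {1..n}"
  define Y where "Y = X - {i}"
  have X: "finite X" and Y: "finite Y" and i: "i \<in> X" using assms(1) X_def Y_def by auto
  obtain M where M: "M \<subseteq> fam X d" and VM: "V = kspan (mono ` M)"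
    using assms(2) unfolding monomial_space_def fam_def X_def by blast
  have finM: "finite M" using M fam_finite[OF X] by (rule finite_subset)
  define M0 where "M0 = {S\<in>M. i \<notin> S}"
  have M0Y: "M0 \<subseteq> fam Y d" using M unfolding M0_def fam_def Y_def by auto
  have finM0: "finite M0" using M0Y fam_finite[OF Y] by (rule finite_subset)
  have D0: "decomp0 i V = kspan (mono ` M0)"
  proof -
    have "{S. i \<notin> S \<and> (mono S :: 'k elt) \<in> V} = M0"
      unfolding VM M0_def by (auto simp: mono_in_span_iff)
    then show ?thesis unfolding decomp0_def by simp
  qed
  have G: "ksubspace V \<and> V \<subseteq> Rdeg X d \<and>
     (\<forall>W :: 'k elt set. ksubspace W \<and> W \<subseteq> Rdeg X d \<and> kdim W = kdim V \<longrightarrow> kdim (m1 X V) \<le> kdim (m1 X W))"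
    using assms(3) unfolding gotzmann_def X_def by blast
  have dimV: "kdim V = card M" unfolding VM by (rule dim_mono_span[OF finM])
  have finuM: "finite (ush X M)" using ush_fam[OF M X] fam_finite[OF X] by (rule finite_subset)
  have m1V: "kdim (m1 X V) = card (ush X M)" unfolding VM m1_mono by (rule dim_mono_span[OF finuM])
  have finuM0: "finite (ush Y M0)" using ush_fam[OF M0Y Y] fam_finite[OF Y] by (rule finite_subset)
  have dimV0: "kdim (kspan (mono ` M0) :: 'k elt set) = card M0" by (rule dim_mono_span[OF finM0])
  have m1V0: "kdim (m1 Y (kspan (mono ` M0)) :: 'k elt set) = card (ush Y M0)"
    unfolding m1_mono by (rule dim_mono_span[OF finuM0])
  have sub0: "(kspan (mono ` M0) :: 'k elt set) \<subseteq> Rdeg Y d"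
    by (rule K.span_minimal[OF _ Rdeg_subspace]) (use M0Y mono_Rdeg in blast)
  have main: "kdim (m1 Y (kspan (mono ` M0) :: 'k elt set)) \<le> kdim (m1 Y W)"
    if W: "ksubspace W" "W \<subseteq> Rdeg Y d" "kdim W = kdim (kspan (mono ` M0) :: 'k elt set)"
    for W :: "'k elt set"
  proof (rule ccontr)
    assume "\<not> ?thesis"
    then have lt1: "kdim (m1 Y W) < card (ush Y M0)" using m1V0 by simp
    obtain A0 where A0: "A0 \<subseteq> fam Y d" "card A0 = kdim W" "card (ush Y A0) \<le> kdim (m1 Y W)"
      using monomialize[OF Y W(1,2)] by blast
    have cA0: "card A0 = card {S\<in>M. i \<notin> S}" using A0(2) W(3) dimV0 M0_def by simp
    have lt2: "card (ush (X - {i}) A0) < card (ush (X - {i}) {S\<in>M. i \<notin> S})"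
      using A0(3) lt1 unfolding Y_def M0_def by simp
    obtain Gf where Gf: "Gf \<subseteq> fam X d" "card Gf = card M" "card (ush X Gf) < card (ush X M)"
      using main_comb[OF X i M _ cA0 lt2] A0(1) unfolding Y_def by blast
    let ?WG = "kspan (mono ` Gf) :: 'k elt set"
    have finG: "finite Gf" using Gf(1) fam_finite[OF X] by (rule finite_subset)
    have finuG: "finite (ush X Gf)" using ush_fam[OF Gf(1) X] fam_finite[OF X] by (rule finite_subset)
    have "ksubspace ?WG" by simp
    moreover have "?WG \<subseteq> Rdeg X d"
      by (rule K.span_minimal[OF _ Rdeg_subspace]) (use Gf(1) mono_Rdeg in blast)
    moreover have "kdim ?WG = kdim V" using dim_mono_span[OF finG] Gf(2) dimV by simp
    ultimately have "kdim (m1 X V) \<le> kdim (m1 X ?WG)" using G by blast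
    moreover have "kdim (m1 X ?WG) = card (ush X Gf)" unfolding m1_mono by (rule dim_mono_span[OF finuG])
    ultimately show False using m1V Gf(3) by simp
  qed
  show ?thesis
    unfolding gotzmann_def D0 Y_def[symmetric] X_def[symmetric]
    using sub0 main by simp
qed

end
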